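(* Every regular Stanley sequence of character $0$ has $S(0)$ as its core, where $S(0)=0,1,3,4,9,10,12,13,27,\ldots$ is the Stanley sequence generated by $\{0\}$.
   Context: A set of non-negative integers is 3-free if no three of its elements form an arithmetic progression. For a finite 3-free set $A=\{a_0<\cdots<a_k\}$ of non-negative integers, the Stanley sequence $S(A)=(a_n)_{n\ge0}$ is the increasing sequence with initial terms $a_0,\ldots,a_k$ in which each subsequent $a_{n+1}$ is the smallest integer greater than $a_n$ such that $\{a_0,\ldots,a_{n+1}\}$ is 3-free. Throughout, Stanley sequences are in root position ($a_0=0$). A Stanley sequence $(a_n)$ is independent with character $\lambda$ if for all sufficiently large $k$: $a_{2^k+i}=a_{2^k}+a_i$ for $0\le i<2^k$, and $a_{2^k}=2a_{2^k-1}-\lambda+1$. A Stanley sequence $(a_n)$ is regular with character $\lambda$ and core $(a'_n)$ if there exist a constant $\sigma$ and an independent Stanley sequence $(a'_n)$ of character $\lambda$ such that for all large $k$ and $0\le i<2^k$: $a_{2^k-\sigma+i}=a_{2^k-\sigma}+a'_i$ and $a_{2^k-\sigma}=2a_{2^k-\sigma-1}-\lambda+1$ (these data are unique). *)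

theory Defs
  imports Main
begin

definition three_free :: "nat set \<Rightarrow> bool" where
  "three_free S \<longleftrightarrow> (\<forall>x\<in>S. \<forall>y\<in>S. \<forall>z\<in>S. x < y \<and> y < z \<longrightarrow> x + z \<noteq> 2 * y)"

primrec greedy_ext :: "nat list \<Rightarrow> nat \<Rightarrow> nat list" where
  "greedy_ext xs 0 = xs"
| "greedy_ext xs (Suc n) =
     (let ys = greedy_ext xs n
      in ys @ [LEAST x. last ys < x \<and> three_free (insert x (set ys))])"

text \<open>The Stanley sequence S(A): its n-th term (meaningful for finite nonempty A).\<close>
definition stanley :: "nat set \<Rightarrow> nat \<Rightarrow> nat" where
  "stanley A n = greedy_ext (sorted_list_of_set A) n ! n"

definition is_stanley :: "(nat \<Rightarrow> nat) \<Rightarrow> bool" where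
  "is_stanley a \<longleftrightarrow> (\<exists>A. finite A \<and> three_free A \<and> 0 \<in> A \<and> a = stanley A)"

definition independent :: "(nat \<Rightarrow> nat) \<Rightarrow> int \<Rightarrow> bool" where
  "independent a lam \<longleftrightarrow> (\<exists>K. \<forall>k\<ge>K.
      (\<forall>i<2^k. a (2^k + i) = a (2^k) + a i) \<and>
      int (a (2^k)) = 2 * int (a (2^k - 1)) - lam + 1)"

definition regular_with :: "(nat \<Rightarrow> nat) \<Rightarrow> int \<Rightarrow> (nat \<Rightarrow> nat) \<Rightarrow> int \<Rightarrow> bool" where
  "regular_with a lam a' \<sigma> \<longleftrightarrow> is_stanley a' \<and> independent a' lam \<and>
     (\<exists>K. \<forall>k\<ge>K. (2::int)^k - \<sigma> \<ge> 1 \<and>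
        (let m = nat ((2::int)^k - \<sigma>) in
          (\<forall>i<2^k. a (m + i) = a m + a' i) \<and>
          int (a m) = 2 * int (a (m - 1)) - lam + 1))"

end

theory Submission
  imports Defs
begin

lemma tf_mono: "T \<subseteq> S \<Longrightarrow> three_free S \<Longrightarrow> three_free T"
  unfolding three_free_def by blast

lemma ge_len: "length (greedy_ext xs n) = length xs + n"
  by (induct n) (simp_all add: Let_def)

lemma ge_prefix: "\<exists>zs. greedy_ext xs (n+d) = greedy_ext xs n @ zs"
proof (induct d)
  case 0 then show ?case by simp
next
  case (Suc d)
  then obtain zs where "greedy_ext xs (n+d) = greedy_ext xs n @ zs" by blast
  then show ?case by (simp add: Let_def)
qed

lemma ge_nth_le: "i < length xs + n \<Longrightarrow> n \<le> n' \<Longrightarrow> greedy_ext xs n' ! i = greedy_ext xs n ! i"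
proof -
  assume a: "i < length xs + n" "n \<le> n'"
  obtain d where d: "n' = n + d" using a(2) le_Suc_ex by blast
  obtain zs where "greedy_ext xs (n+d) = greedy_ext xs n @ zs" using ge_prefix by blast
  then show ?thesis using a(1) d by (simp add: nth_append ge_len)
qed

lemma ge_nth:
  assumes "i < length xs + n" "i < length xs + n'"
  shows "greedy_ext xs n' ! i = greedy_ext xs n ! i"
proof (cases "n \<le> n'")
  case True then show ?thesis using ge_nth_le assms by blast
next
  case False then show ?thesis using ge_nth_le[of i xs n' n] assms by simp
qed

lemma sorted_le_last: "sorted_wrt (<) ys \<Longrightarrow> e \<in> set ys \<Longrightarrow> e \<le> (last ys::nat)"
proof (induct ys rule: rev_induct)
  case Nil then show ?case by simp
next
  case (snoc x xs) then show ?case by (auto simp: sorted_wrt_append)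
qed

lemma ext_ok:
  assumes "ys \<noteq> []" "sorted_wrt (<) ys"
  shows "\<exists>x. last ys < x \<and> three_free (insert x (set ys)) \<or> \<not> three_free (set ys)"
proof (cases "three_free (set ys)")
  case True
  have le: "\<And>e. e \<in> set ys \<Longrightarrow> e \<le> last ys" using sorted_le_last assms by blast
  have "three_free (insert (2 * last ys + 1) (set ys))"
    unfolding three_free_def
  proof (intro ballI impI)
    fix x y z assume xyz: "x \<in> insert (2 * last ys + 1) (set ys)" "y \<in> insert (2 * last ys + 1) (set ys)"
      "z \<in> insert (2 * last ys + 1) (set ys)" "x < y \<and> y < z"
    show "x + z \<noteq> 2 * y"
    proof (cases "z = 2 * last ys + 1")
      case True
      have "y \<in> set ys" using xyz True by auto
      then have "y \<le> last ys" using le by blast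
      then show ?thesis using True by linarith
    next
      case False
      then have "z \<in> set ys" using xyz by auto
      then have zl: "z \<le> last ys" using le by blast
      then have "y \<in> set ys" "x \<in> set ys" using xyz by auto
      then show ?thesis using True \<open>z \<in> set ys\<close> xyz(4) unfolding three_free_def by blast
    qed
  qed
  then show ?thesis by auto
qed simp

lemma ge_inv:
  assumes "xs \<noteq> []" "sorted_wrt (<) xs" "three_free (set xs)"
  shows "sorted_wrt (<) (greedy_ext xs n) \<and> three_free (set (greedy_ext xs n))"
proof (induct n)
  case 0 then show ?case using assms by simp
next
  case (Suc n)
  define ys where "ys = greedy_ext xs n"
  have ne: "ys \<noteq> []" using ge_len[of xs n] assms(1) ys_def by auto
  define P where "P = (\<lambda>x. last ys < x \<and> three_free (insert x (set ys)))"
  have "\<exists>x. P x" using ext_ok[OF ne] Suc ys_def P_def by auto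
  then have L: "P (LEAST x. P x)" by (rule LeastI_ex)
  have le: "\<And>e. e \<in> set ys \<Longrightarrow> e \<le> last ys" using sorted_le_last Suc ys_def by blast
  have "sorted_wrt (<) (ys @ [LEAST x. P x])"
    using Suc L le ys_def unfolding P_def by (force simp: sorted_wrt_append)
  moreover have "three_free (set (ys @ [LEAST x. P x]))" using L unfolding P_def by simp
  ultimately show ?case by (simp add: ys_def P_def Let_def)
qed

lemma stanley_facts:
  assumes "finite B" "three_free B" "0 \<in> B"
  defines "xs \<equiv> sorted_list_of_set B"
  defines "L \<equiv> length xs"
  shows "L \<ge> 1"
    and "\<And>i n. i < L + n \<Longrightarrow> stanley B i = greedy_ext xs n ! i"
    and "\<And>n. set (greedy_ext xs n) = stanley B ` {..<L+n}"
    and "\<And>i j. i < j \<Longrightarrow> stanley B i < stanley B j"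
    and "\<And>M. three_free (stanley B ` {..<M})"
    and "\<And>n y. stanley B (L+n-1) < y \<Longrightarrow> y < stanley B (L+n) \<Longrightarrow>
            \<not> three_free (insert y (stanley B ` {..<L+n}))"
proof -
  have sx: "sorted_wrt (<) xs" "set xs = B" using assms(1) xs_def by auto
  then have ne: "xs \<noteq> []" using assms(3) by auto
  then show L1: "L \<ge> 1" unfolding L_def by (cases xs) auto
  have inv: "\<And>n. sorted_wrt (<) (greedy_ext xs n) \<and> three_free (set (greedy_ext xs n))"
    using ge_inv[OF ne sx(1)] sx(2) assms(2) by simp
  show nth: "\<And>i n. i < L + n \<Longrightarrow> stanley B i = greedy_ext xs n ! i"
  proof -
    fix i n assume "i < L + n"
    moreover have "i < L + i" using L1 by simp
    ultimately show "stanley B i = greedy_ext xs n ! i"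
      using ge_nth[of i xs n i] unfolding stanley_def xs_def L_def by simp
  qed
  show st: "\<And>n. set (greedy_ext xs n) = stanley B ` {..<L+n}"
  proof -
    fix n
    have "set (greedy_ext xs n) = {greedy_ext xs n ! i | i. i < L + n}"
      by (simp add: set_conv_nth ge_len L_def)
    also have "\<dots> = stanley B ` {..<L+n}" using nth by auto
    finally show "set (greedy_ext xs n) = stanley B ` {..<L+n}" .
  qed
  show mono: "\<And>i j. i < j \<Longrightarrow> stanley B i < stanley B j"
  proof -
    fix i j :: nat assume ij: "i < j"
    have "j < length (greedy_ext xs j)" using L1 ge_len[of xs j] unfolding L_def by linarith
    then have "greedy_ext xs j ! i < greedy_ext xs j ! j"
      using inv[of j] ij by (simp add: sorted_wrt_iff_nth_less)
    then show "stanley B i < stanley B j" using nth[of i j] nth[of j j] ij L1 by simp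
  qed
  show "\<And>M. three_free (stanley B ` {..<M})"
  proof -
    fix M
    have "stanley B ` {..<M} \<subseteq> set (greedy_ext xs M)" using st by auto
    then show "three_free (stanley B ` {..<M})" using inv tf_mono by blast
  qed
  show "\<And>n y. stanley B (L+n-1) < y \<Longrightarrow> y < stanley B (L+n) \<Longrightarrow>
            \<not> three_free (insert y (stanley B ` {..<L+n}))"
  proof -
    fix n y assume y: "stanley B (L+n-1) < y" "y < stanley B (L+n)"
    define ys where "ys = greedy_ext xs n"
    have lys: "length ys = L + n" using ys_def ge_len L_def by simp
    have last: "last ys = stanley B (L+n-1)"
    proof -
      have "ys \<noteq> []" using lys L1 by (cases ys) auto
      then have "last ys = ys ! (L+n-1)" using lys by (simp add: last_conv_nth)
      then show ?thesis using nth[of "L+n-1" n] L1 ys_def by simp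
    qed
    have "stanley B (L+n) = greedy_ext xs (Suc n) ! (L+n)" by (rule nth) simp
    also have "\<dots> = (LEAST x. last ys < x \<and> three_free (insert x (set ys)))"
      using lys by (simp add: ys_def Let_def nth_append)
    finally have "y < (LEAST x. last ys < x \<and> three_free (insert x (set ys)))" using y by simp
    then have "\<not> (last ys < y \<and> three_free (insert y (set ys)))" by (rule not_less_Least)
    then show "\<not> three_free (insert y (stanley B ` {..<L+n}))"
      using last y st ys_def by simp
  qed
qed

theorem mainTheorem13:
  fixes a a' :: "nat \<Rightarrow> nat" and \<sigma> :: int
  assumes "is_stanley a"
    and "regular_with a 0 a' \<sigma>"
  shows "a' = stanley {0}"
proof -
  have st': "is_stanley a'" and ind: "independent a' 0" using assms(2) unfolding regular_with_def by auto
  obtain B where B: "finite B" "three_free B" "0 \<in> B" and aB: "a' = stanley B"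
    using st' unfolding is_stanley_def by blast
  define xs where "xs = sorted_list_of_set B"
  define L where "L = length xs"
  note F = stanley_facts[OF B, folded xs_def, folded L_def, folded aB]
  obtain K where K: "\<And>k. k \<ge> K \<Longrightarrow> (\<forall>i<2^k. a' (2^k + i) = a' (2^k) + a' i) \<and>
      int (a' (2^k)) = 2 * int (a' (2^k - 1)) - 0 + 1"
    using ind unfolding independent_def by blast
  have mono: "\<And>i j. i \<le> j \<Longrightarrow> a' i \<le> a' j"
  proof -
    fix i j :: nat assume "i \<le> j"
    then show "a' i \<le> a' j" using F(4)[of i j] by (cases "i = j") auto
  qed
  have a0: "a' 0 = 0"
  proof -
    have "0 \<in> set (greedy_ext xs 0)" using B xs_def by simp
    then obtain i where "a' i = 0" using F(3)[of 0] by auto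
    then show ?thesis using mono[of 0 i] by simp
  qed
  have key: "\<And>n y. a' n < y \<Longrightarrow> three_free (insert y (a' ` {..<Suc n})) \<Longrightarrow> a' (Suc n) \<le> y"
  proof (rule ccontr)
    fix n y assume y1: "a' n < y" and tfy: "three_free (insert y (a' ` {..<Suc n}))"
      and "\<not> a' (Suc n) \<le> y"
    then have y2: "y < a' (Suc n)" by simp
    define k where "k = max K (Suc n + L)"
    define T where "T = (2::nat)^k"
    have kK: "k \<ge> K" unfolding k_def by simp
    have "k < T" unfolding T_def by (rule less_exp)
    then have TL: "Suc n + L < T" unfolding k_def by simp
    have Kk: "\<forall>i<T. a' (T + i) = a' T + a' i" using K[OF kK] unfolding T_def by blast
    have "int (a' T) = 2 * int (a' (T - 1)) + 1" using K[OF kK] unfolding T_def by simp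
    then have aT: "a' T = 2 * a' (T-1) + 1" by linarith
    define m where "m = a' (T - 1)"
    have below: "\<And>i. i < T \<Longrightarrow> a' i \<le> m" unfolding m_def using mono by simp
    define j where "j = T + n"
    have sj: "a' j = a' T + a' n" using Kk TL j_def by simp
    have "Suc n < T" using TL by simp
    then have "a' (T + Suc n) = a' T + a' (Suc n)" using Kk by blast
    then have sj1: "a' (j+1) = a' T + a' (Suc n)" by (simp add: j_def)
    define yy where "yy = a' T + y"
    have g1: "a' (L + (j+1-L) - 1) < yy" using sj y1 TL j_def yy_def by simp
    have g2: "yy < a' (L + (j+1-L))" using sj1 y2 TL j_def yy_def by simp
    have "\<not> three_free (insert yy (a' ` {..<L + (j+1-L)}))" using F(6)[OF g1 g2] .
    moreover have "L + (j+1-L) = Suc j" using TL j_def by simp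
    ultimately have ntf: "\<not> three_free (insert yy (a' ` {..<Suc j}))" by simp
    define S where "S = a' ` {..<Suc j}"
    have tfS: "three_free S" unfolding S_def using F(5) .
    have Sless: "\<And>e. e \<in> S \<Longrightarrow> e < yy"
    proof -
      fix e assume "e \<in> S"
      then obtain i where "i < Suc j" "e = a' i" unfolding S_def by auto
      then have "e \<le> a' j" using mono by simp
      then show "e < yy" using sj y1 yy_def by simp
    qed
    obtain p q r where pqr: "p \<in> insert yy S" "q \<in> insert yy S" "r \<in> insert yy S"
      "p < q" "q < r" "p + r = 2 * q"
      using ntf unfolding S_def[symmetric] three_free_def by blast
    have ryy: "r = yy"
    proof (rule ccontr)
      assume "r \<noteq> yy"
      then have "r \<in> S" using pqr by simp
      then have "r < yy" using Sless by simp
      then have "p \<in> S" "q \<in> S" using pqr by auto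
      then show False using tfS[unfolded three_free_def, rule_format, of p q r] pqr \<open>r \<in> S\<close> by simp
    qed
    have pS: "p \<in> S" and qS: "q \<in> S" using pqr ryy by auto
    obtain iq where iq: "iq < Suc j" "q = a' iq" using qS unfolding S_def by auto
    obtain ip where ip: "ip < Suc j" "p = a' ip" using pS unfolding S_def by auto
    have "iq \<ge> T"
    proof (rule ccontr)
      assume "\<not> iq \<ge> T"
      then have "q \<le> m" using below iq by simp
      then show False using pqr(6) ryy yy_def aT m_def by linarith
    qed
    define u where "u = iq - T"
    have u1: "iq = T + u" "u \<le> n" using iq j_def \<open>iq \<ge> T\<close> u_def by auto
    then have "u < T" using TL by simp
    then have u: "u \<le> n" "q = a' T + a' u" using Kk u1 iq by auto
    have yle: "y \<le> m" using y2 below[of "Suc n"] TL by simp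
    have "ip \<ge> T"
    proof (rule ccontr)
      assume "\<not> ip \<ge> T"
      then have "p \<le> m" using below ip by simp
      then show False using pqr(6) ryy yy_def aT m_def u yle by linarith
    qed
    define v where "v = ip - T"
    have v1: "ip = T + v" "v \<le> n" using ip j_def \<open>ip \<ge> T\<close> v_def by auto
    then have "v < T" using TL by simp
    then have v: "v \<le> n" "p = a' T + a' v" using Kk v1 ip by auto
    have vu: "a' v < a' u" using pqr(4) u v by simp
    have eq: "a' v + y = 2 * a' u" using pqr(6) ryy yy_def u v by simp
    have "a' v \<in> insert y (a' ` {..<Suc n})" "a' u \<in> insert y (a' ` {..<Suc n})"
      using u v by auto
    moreover have "y \<in> insert y (a' ` {..<Suc n})" by simp
    moreover have "a' u < y" using eq vu by linarith
    ultimately show False using tfy[unfolded three_free_def, rule_format, of "a' v" "a' u" y] vu eq by simp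
  qed
  have main: "\<And>n. greedy_ext [0] n = map a' [0..<Suc n]"
  proof -
    fix n show "greedy_ext [0] n = map a' [0..<Suc n]"
    proof (induct n)
      case 0 then show ?case using a0 by simp
    next
      case (Suc n)
      have lst: "last (map a' [0..<Suc n]) = a' n" by simp
      have sts: "set (map a' [0..<Suc n]) = a' ` {..<Suc n}" by (simp only: set_map set_upt lessThan_atLeast0)
      have "(LEAST x. a' n < x \<and> three_free (insert x (a' ` {..<Suc n}))) = a' (Suc n)"
      proof (rule Least_equality)
        have "insert (a' (Suc n)) (a' ` {..<Suc n}) = a' ` {..<Suc (Suc n)}"
          by (simp add: lessThan_Suc)
        then show "a' n < a' (Suc n) \<and> three_free (insert (a' (Suc n)) (a' ` {..<Suc n}))"
          using F(4)[of n "Suc n"] F(5) by simp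
      next
        fix y assume "a' n < y \<and> three_free (insert y (a' ` {..<Suc n}))"
        then show "a' (Suc n) \<le> y" using key by blast
      qed
      then show ?case using Suc lst sts by (simp add: Let_def)
    qed
  qed
  show ?thesis
  proof
    fix n
    have "stanley {0} n = greedy_ext [0] n ! n" unfolding stanley_def by simp
    also have "\<dots> = a' n" using main[of n] by (simp del: upt_Suc)
    finally show "a' n = stanley {0} n" by simp
  qed
qed

end
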